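(* Let $r \ge 3$ and let $n$ be defined by $n=2$ if $r=3$, $n=\lfloor r/2\rfloor$ if $4\le r\le 7$, and $n=\lceil r/2\rceil-1$ if $r\ge 8$. Let $I_1\subseteq\mathbb{F}_3^r$ be the set of vectors with all entries in $\{0,1\}$ having exactly $k$ entries equal to $1$ for some $k\in[n,2n-1]$, and let $I_2=\{2x : x\in I_1\}$. Let $R\subseteq I_1$ be the fixed set of $r$ regular redundant indices chosen by the construction, which forms a basis of $\mathbb{F}_3^r$. The position set is $I=I_1\cup I_2\cup\{O,E\}$, where $O,E$ are two additional positions. A word $v=(v_i)_{i\in I}\in\mathbb{F}_3^{I}$ is an A2 codeword if \[\bigoplus_{i\in I_1\cup I_2} v_i\cdot i = 0\ \text{ in } \mathbb{F}_3^r,\qquad v_O+\sum_{i\in I_1} v_i\equiv 0 \pmod 3,\qquad v_E+\sum_{i\in I_2} v_i\equiv 0\pmod 3.\] The message positions are $M=(I_1\cup I_2)\setminus R$, and a message $X\in\mathbb{F}_3^{M}$ is encoded as the unique A2 codeword $X'$ whose restriction to $M$ equals $X$. Then for any two distinct messages $X\neq Y$, the codewords $X'$ and $Y'$ differ in at least $4$ positions.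
   Context: Index vectors are identified with $r$-trit ternary strings; $\oplus$ denotes componentwise addition modulo $3$ on $\mathbb{F}_3^r$ (the paper calls it ternary XOR), and $v_i\cdot i$ means the vector $i$ scaled by $v_i\in\mathbb{F}_3$. For example, with $r=4$, $n=2$, $R=\{0011,0110,0111,1110\}$ this gives the $[22,16,4]_3$ code. *)

theory Defs
  imports Main
begin

text \<open>Vectors of F_3^r are modelled as functions nat => int with entries in {0,1,2}
  at coordinates below r and 0 elsewhere; arithmetic is taken mod 3.\<close>

definition nval :: "nat \<Rightarrow> nat" where
  "nval r = (if r = 3 then 2 else if r \<le> 7 then r div 2 else (r + 1) div 2 - 1)"

definition vecs :: "nat \<Rightarrow> (nat \<Rightarrow> int) set" where
  "vecs r = {x. (\<forall>j. j < r \<longrightarrow> x j \<in> {0,1,2}) \<and> (\<forall>j. r \<le> j \<longrightarrow> x j = 0)}"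

definition I1 :: "nat \<Rightarrow> (nat \<Rightarrow> int) set" where
  "I1 r = {x. (\<forall>j. j < r \<longrightarrow> x j \<in> {0,1}) \<and> (\<forall>j. r \<le> j \<longrightarrow> x j = 0) \<and>
              card {j. j < r \<and> x j = 1} \<in> {nval r .. 2 * nval r - 1}}"

definition I2 :: "nat \<Rightarrow> (nat \<Rightarrow> int) set" where
  "I2 r = (\<lambda>x j. (2 * x j) mod 3) ` I1 r"

datatype pos = P "nat \<Rightarrow> int" | PosO | PosE

definition positions :: "nat \<Rightarrow> pos set" where
  "positions r = P ` (I1 r \<union> I2 r) \<union> {PosO, PosE}"

definition is_word :: "nat \<Rightarrow> (pos \<Rightarrow> int) \<Rightarrow> bool" where
  "is_word r v \<longleftrightarrow> (\<forall>p. v p \<in> {0,1,2}) \<and> (\<forall>p. p \<notin> positions r \<longrightarrow> v p = 0)"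

definition A2_codeword :: "nat \<Rightarrow> (pos \<Rightarrow> int) \<Rightarrow> bool" where
  "A2_codeword r v \<longleftrightarrow> is_word r v \<and>
     (\<forall>j < r. (\<Sum>i \<in> I1 r \<union> I2 r. v (P i) * i j) mod 3 = 0) \<and>
     (v PosO + (\<Sum>i \<in> I1 r. v (P i))) mod 3 = 0 \<and>
     (v PosE + (\<Sum>i \<in> I2 r. v (P i))) mod 3 = 0"

definition is_basis :: "nat \<Rightarrow> (nat \<Rightarrow> int) set \<Rightarrow> bool" where
  "is_basis r R \<longleftrightarrow> R \<subseteq> vecs r \<and>
     (\<forall>y \<in> vecs r. \<exists>c. (\<forall>i\<in>R. c i \<in> {0,1,2}) \<and>
         (\<forall>j < r. (\<Sum>i\<in>R. c i * i j) mod 3 = y j)) \<and>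
     (\<forall>c. (\<forall>i\<in>R. c i \<in> {0,1,2}) \<longrightarrow> (\<forall>j < r. (\<Sum>i\<in>R. c i * i j) mod 3 = 0)
          \<longrightarrow> (\<forall>i\<in>R. c i = 0))"

definition msg_positions :: "nat \<Rightarrow> (nat \<Rightarrow> int) set \<Rightarrow> (nat \<Rightarrow> int) set" where
  "msg_positions r R = (I1 r \<union> I2 r) - R"

definition encode :: "nat \<Rightarrow> (nat \<Rightarrow> int) set \<Rightarrow> ((nat \<Rightarrow> int) \<Rightarrow> int) \<Rightarrow> (pos \<Rightarrow> int)" where
  "encode r R X = (THE w. A2_codeword r w \<and> (\<forall>m \<in> msg_positions r R. w (P m) = X m))"

end

theory Submission
  imports Defs "HOL-Library.FuncSet"
begin


lemma mod3_cases: "(z::int) mod 3 \<in> {0,1,2}"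
proof -
  have "0 \<le> z mod 3" "z mod 3 < 3" by simp_all
  then show ?thesis by auto
qed

lemma eq3: "(a::int) \<in> {0,1,2} \<Longrightarrow> b \<in> {0,1,2} \<Longrightarrow> (a - b) mod 3 = 0 \<longleftrightarrow> a = b"
  by (elim insertE emptyE; simp)

lemma nval_pos: "r \<ge> 3 \<Longrightarrow> nval r \<ge> 1" unfolding nval_def by presburger

lemma vecs_finite: "finite (vecs r)"
proof -
  define g where "g = (\<lambda>f::nat\<Rightarrow>int. \<lambda>j. if j < r then f j else 0)"
  have sub: "vecs r \<subseteq> g ` (PiE {..<r} (\<lambda>_. {0,1,2}))"
  proof
    fix x assume x: "x \<in> vecs r"
    have x1: "\<forall>j<r. x j \<in> {0,1,2}" and x2: "\<forall>j. r \<le> j \<longrightarrow> x j = 0" using x unfolding vecs_def by simp_all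
    have m: "restrict x {..<r} \<in> PiE {..<r} (\<lambda>_. {0,1,2})" unfolding restrict_PiE_iff using x1 by simp
    have e: "x = g (restrict x {..<r})" unfolding g_def fun_eq_iff using x2 by (simp add: not_less)
    show "x \<in> g ` (PiE {..<r} (\<lambda>_. {0,1,2}))" using e m by (rule image_eqI)
  qed
  have "finite (PiE {..<r} (\<lambda>_::nat. {0,1,2::int}))" by (rule finite_PiE) simp_all
  then show ?thesis using finite_subset[OF sub finite_imageI] by blast
qed

lemma I1_sub: "I1 r \<subseteq> vecs r" by (auto simp: I1_def vecs_def)

lemma I2_sub: "I2 r \<subseteq> vecs r"
proof
  fix y assume "y \<in> I2 r"
  then obtain x where x: "x \<in> I1 r" "y = (\<lambda>j. (2 * x j) mod 3)" by (auto simp: I2_def)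
  have "\<forall>j. r \<le> j \<longrightarrow> x j = 0" using x(1) by (simp add: I1_def)
  then show "y \<in> vecs r" using x(2) mod3_cases by (simp add: vecs_def)
qed

lemma fin_I1: "finite (I1 r)" using finite_subset[OF I1_sub vecs_finite] .
lemma fin_I2: "finite (I2 r)" using finite_subset[OF I2_sub vecs_finite] .

lemma I1_props: assumes "r \<ge> 3" "x \<in> I1 r"
  shows "(\<forall>j<r. x j \<in> {0,1}) \<and> (\<forall>j. r \<le> j \<longrightarrow> x j = 0) \<and> (\<exists>j<r. x j = 1)"
proof -
  have a: "\<forall>j<r. x j \<in> {0,1}" "\<forall>j. r \<le> j \<longrightarrow> x j = 0"
    "card {j. j < r \<and> x j = 1} \<ge> nval r" using assms(2) unfolding I1_def by simp_all
  then have "card {j. j < r \<and> x j = 1} \<ge> 1" using nval_pos[OF assms(1)] by linarith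
  then have "{j. j < r \<and> x j = 1} \<noteq> {}" by (metis card.empty not_one_le_zero)
  then have "\<exists>j<r. x j = 1" by blast
  then show ?thesis using a(1,2) by blast
qed

lemma I2_props: assumes "r \<ge> 3" "y \<in> I2 r"
  shows "(\<forall>j<r. y j \<in> {0,2}) \<and> (\<forall>j. r \<le> j \<longrightarrow> y j = 0) \<and> (\<exists>j<r. y j = 2)"
proof -
  obtain x where x: "x \<in> I1 r" "y = (\<lambda>j. (2 * x j) mod 3)" using assms by (auto simp: I2_def)
  note p = I1_props[OF assms(1) x(1)]
  have 1: "y j \<in> {0,2}" if "j < r" for j
  proof -
    have "x j = 0 \<or> x j = 1" using p that by blast
    then show ?thesis using x(2) by auto
  qed
  have 2: "y j = 0" if "r \<le> j" for j using p that x(2) by simp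
  obtain j where "j < r" "x j = 1" using p by blast
  then have "y j = 2" using x(2) by simp
  then show ?thesis using 1 2 \<open>j < r\<close> by blast
qed

lemma I12_disj: assumes "r \<ge> 3" shows "I1 r \<inter> I2 r = {}"
proof (rule ccontr)
  assume "I1 r \<inter> I2 r \<noteq> {}"
  then obtain x where x: "x \<in> I1 r" "x \<in> I2 r" by blast
  obtain j where j: "j < r" "x j = 1" using I1_props[OF assms x(1)] by blast
  have "x j \<in> {0,2}" using I2_props[OF assms x(2)] j(1) by blast
  then show False using j(2) by simp
qed

lemma brute3:
  fixes x y z t a b c :: int
  assumes "t\<in>{1,2}" "x\<in>{0,t}" "y\<in>{0,t}" "z\<in>{0,t}" "a\<in>{1,2}" "b\<in>{1,2}" "c\<in>{1,2}"
    "(a+b+c) mod 3 = 0" "(a*x+b*y+c*z) mod 3 = 0"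
  shows "x = y"
  using assms by (elim insertE emptyE; simp)

lemma brute1: fixes t a :: int assumes "t\<in>{1,2}" "a\<in>{1,2}" "(a*t) mod 3 = 0" shows False
  using assms by (elim insertE emptyE; simp)

lemma brute2: fixes t x y a b :: int
  assumes "t\<in>{1,2}" "x\<in>{0,t}" "y\<in>{0,t}" "x \<noteq> y" "a\<in>{1,2}" "b\<in>{1,2}" "(a*x+b*y) mod 3 = 0" shows False
  using assms by (elim insertE emptyE; simp)

lemma key:
  fixes C :: "(nat\<Rightarrow>int) set" and d :: "(nat\<Rightarrow>int) \<Rightarrow> int" and t :: int
  assumes t: "t \<in> {1,2}" and fin: "finite C"
    and tv: "\<And>x. x\<in>C \<Longrightarrow> (\<forall>j<r. x j \<in> {0,t}) \<and> (\<forall>j. r \<le> j \<longrightarrow> x j = 0) \<and> (\<exists>j<r. x j = t)"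
    and dC: "\<And>x. x\<in>C \<Longrightarrow> d x \<in> {1,2}"
    and eq: "\<And>j. j<r \<Longrightarrow> (\<Sum>x\<in>C. d x * x j) mod 3 = 0"
  shows "card C \<noteq> 1 \<and> card C \<noteq> 2 \<and> (card C = 3 \<longrightarrow> (\<Sum>x\<in>C. d x) mod 3 \<noteq> 0)"
proof -
  have tj: "x j \<in> {0,t}" if "x \<in> C" "j < r" for x j using tv[OF that(1)] that(2) by blast
  have dif: "\<exists>j<r. a j \<noteq> b j" if "a \<in> C" "b \<in> C" "a \<noteq> b" for a b
  proof (rule ccontr)
    assume n: "\<not> ?thesis"
    have "a j = b j" for j
    proof (cases "j < r")
      case True then show ?thesis using n by blast
    next
      case False then have "r \<le> j" by simp
      then show ?thesis using tv[OF that(1)] tv[OF that(2)] by simp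
    qed
    then show False using that(3) by blast
  qed
  have c1: "card C \<noteq> 1"
  proof
    assume "card C = 1"
    then obtain a where a: "C = {a}" by (metis card_1_singletonE)
    then obtain j where j: "j < r" "a j = t" using tv by blast
    have "(d a * t) mod 3 = 0" using eq[OF j(1)] a j by simp
    then show False using brute1[OF t dC[of a]] a by simp
  qed
  have c2: "card C \<noteq> 2"
  proof
    assume "card C = 2"
    then obtain a b where ab: "C = {a,b}" "a \<noteq> b" by (auto simp: card_2_iff)
    then obtain j where j: "j < r" "a j \<noteq> b j" using dif by blast
    have e: "(d a * a j + d b * b j) mod 3 = 0" using eq[OF j(1)] ab by simp
    have m: "a j \<in> {0,t}" "b j \<in> {0,t}" using tj ab j by simp_all
    have dd: "d a \<in> {1,2}" "d b \<in> {1,2}" using dC ab by simp_all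
    show False by (rule brute2[OF t m j(2) dd e])
  qed
  have c3: "(\<Sum>x\<in>C. d x) mod 3 \<noteq> 0" if "card C = 3"
  proof
    assume s: "(\<Sum>x\<in>C. d x) mod 3 = 0"
    obtain a b c where abc: "C = {a,b,c}" "a \<noteq> b" "b \<noteq> c" "a \<noteq> c"
      using \<open>card C = 3\<close> card_3_iff[of C] by blast
    then obtain j where j: "j < r" "a j \<noteq> b j" using dif by blast
    have e1: "(d a * a j + d b * b j + d c * c j) mod 3 = 0" using eq[OF j(1)] abc by (simp add: add.assoc)
    have e2: "(d a + d b + d c) mod 3 = 0" using s abc by (simp add: add.assoc)
    have m: "a j \<in> {0,t}" "b j \<in> {0,t}" "c j \<in> {0,t}" using tj abc j by simp_all
    have dd: "d a \<in> {1,2}" "d b \<in> {1,2}" "d c \<in> {1,2}" using dC abc by simp_all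
    have "a j = b j" by (rule brute3[OF t m dd e2 e1])
    then show False using j by simp
  qed
  show ?thesis using c1 c2 c3 by blast
qed

lemma diff_eq:
  fixes S T :: "'a set" and u v k :: "'a \<Rightarrow> int" and a1 a2 :: int
  assumes "finite S" "T \<subseteq> S" "\<And>i. i \<in> S - T \<Longrightarrow> u i = v i"
    "(a1 + (\<Sum>i\<in>S. u i * k i)) mod 3 = 0" "(a2 + (\<Sum>i\<in>S. v i * k i)) mod 3 = 0"
  shows "((a1 - a2) mod 3 + (\<Sum>i\<in>T. ((u i - v i) mod 3) * k i)) mod 3 = 0"
proof -
  define Z where "Z = (\<Sum>i\<in>T. ((u i - v i) mod 3) * k i)"
  define Zt where "Zt = (\<Sum>i\<in>T. (u i - v i) * k i)"
  have 1: "Z - Zt = (\<Sum>i\<in>T. ((u i - v i) mod 3 - (u i - v i)) * k i)"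
    by (simp add: Z_def Zt_def sum_subtractf left_diff_distrib)
  have m: "(3::int) dvd (x mod 3 - x)" for x :: int
    using mod_eq_dvd_iff[of "x mod 3" 3 x] by simp
  have d1: "3 dvd (Z - Zt)" unfolding 1 by (rule dvd_sum) (simp add: m)
  have "Zt = (\<Sum>i\<in>S. (u i - v i) * k i)" unfolding Zt_def
    by (rule sum.mono_neutral_left) (use assms in auto)
  also have "\<dots> = (\<Sum>i\<in>S. u i * k i) - (\<Sum>i\<in>S. v i * k i)"
    by (simp add: sum_subtractf left_diff_distrib)
  finally have zt: "Zt = (\<Sum>i\<in>S. u i * k i) - (\<Sum>i\<in>S. v i * k i)" .
  have "(a1 - a2) mod 3 + Z = ((a1 - a2) mod 3 - (a1 - a2)) + (Z - Zt)
      + (a1 + (\<Sum>i\<in>S. u i * k i)) - (a2 + (\<Sum>i\<in>S. v i * k i))" by (simp add: zt)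
  moreover have "3 dvd ((a1 - a2) mod 3 - (a1 - a2)) + (Z - Zt)
      + (a1 + (\<Sum>i\<in>S. u i * k i)) - (a2 + (\<Sum>i\<in>S. v i * k i))"
  proof -
    have hC: "3 dvd (a1 + (\<Sum>i\<in>S. u i * k i))" using assms(4) by (simp add: mod_eq_0_iff_dvd)
    have hD: "3 dvd (a2 + (\<Sum>i\<in>S. v i * k i))" using assms(5) by (simp add: mod_eq_0_iff_dvd)
    show ?thesis by (rule dvd_diff[OF dvd_add[OF dvd_add[OF m d1] hC] hD])
  qed
  ultimately show ?thesis by (simp add: Z_def mod_eq_0_iff_dvd)
qed



lemma encode_ok:
  assumes R: "R \<subseteq> I1 r" and B: "is_basis r R" and X: "\<forall>m\<in>msg_positions r R. X m \<in> {0,1,2}"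
  shows "A2_codeword r (encode r R X) \<and> (\<forall>m\<in>msg_positions r R. encode r R X (P m) = X m)"
proof -
  let ?M = "msg_positions r R"
  let ?S = "I1 r \<union> I2 r"
  let ?Q = "\<lambda>w. A2_codeword r w \<and> (\<forall>m\<in>?M. w (P m) = X m)"
  have finS: "finite ?S" using fin_I1 fin_I2 by blast
  have finR: "finite R" using R fin_I1 finite_subset by blast
  have finM: "finite ?M" using finS by (simp add: msg_positions_def)
  have SRM: "?S = R \<union> ?M" using R by (auto simp: msg_positions_def)
  have RMd: "R \<inter> ?M = {}" by (auto simp: msg_positions_def)
  define y where "y = (\<lambda>j. if j < r then (- (\<Sum>m\<in>?M. X m * m j)) mod 3 else 0)"
  have "y \<in> vecs r" by (auto simp: y_def vecs_def mod3_cases)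
  then obtain c where c1: "\<forall>i\<in>R. c i \<in> {0,1,2}" and c2: "\<forall>j<r. (\<Sum>i\<in>R. c i * i j) mod 3 = y j"
    using B unfolding is_basis_def by blast
  define val where "val i = (if i \<in> R then c i else if i \<in> ?M then X i else 0)" for i
  define w where "w p = (case p of P i \<Rightarrow> val i | PosO \<Rightarrow> (- (\<Sum>i\<in>I1 r. val i)) mod 3
     | PosE \<Rightarrow> (- (\<Sum>i\<in>I2 r. val i)) mod 3)" for p
  have wP: "w (P i) = val i" for i by (simp add: w_def)
  have vals: "val i \<in> {0,1,2}" for i using c1 X by (auto simp: val_def)
  have word: "is_word r w"
    unfolding is_word_def
  proof (intro conjI allI impI)
    fix p show "w p \<in> {0,1,2}" by (cases p) (simp_all only: w_def pos.case vals mod3_cases)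
  next
    fix p assume "p \<notin> positions r"
    then obtain i where "p = P i" "i \<notin> ?S" by (cases p) (auto simp: positions_def)
    then show "w p = 0" using R by (auto simp: w_def val_def msg_positions_def)
  qed
  have vec: "(\<Sum>i\<in>?S. w (P i) * i j) mod 3 = 0" if j: "j < r" for j
  proof -
    have "(\<Sum>i\<in>?S. w (P i) * i j) = (\<Sum>i\<in>R. w (P i) * i j) + (\<Sum>i\<in>?M. w (P i) * i j)"
      unfolding SRM by (rule sum.union_disjoint[OF finR finM RMd])
    also have "(\<Sum>i\<in>R. w (P i) * i j) = (\<Sum>i\<in>R. c i * i j)"
      by (rule sum.cong) (auto simp: wP val_def)
    also have "(\<Sum>i\<in>?M. w (P i) * i j) = (\<Sum>m\<in>?M. X m * m j)"
      by (rule sum.cong) (auto simp: wP val_def msg_positions_def)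
    finally have e: "(\<Sum>i\<in>?S. w (P i) * i j) = (\<Sum>i\<in>R. c i * i j) + (\<Sum>m\<in>?M. X m * m j)" .
    have "(\<Sum>i\<in>R. c i * i j) mod 3 = (- (\<Sum>m\<in>?M. X m * m j)) mod 3" using c2 j by (simp add: y_def)
    then have hc: "(\<Sum>i\<in>R. c i * i j) mod 3 = (- (\<Sum>m\<in>?M. X m * m j)) mod 3" .
    have "((\<Sum>i\<in>R. c i * i j) + (\<Sum>m\<in>?M. X m * m j)) mod 3
        = ((\<Sum>i\<in>R. c i * i j) mod 3 + (\<Sum>m\<in>?M. X m * m j)) mod 3"
      by (simp add: mod_add_left_eq)
    also have "\<dots> = ((- (\<Sum>m\<in>?M. X m * m j)) mod 3 + (\<Sum>m\<in>?M. X m * m j)) mod 3"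
      by (simp only: hc)
    also have "\<dots> = 0" by (simp add: mod_add_left_eq)
    finally show ?thesis using e by simp
  qed
  have o: "(w PosO + (\<Sum>i\<in>I1 r. w (P i))) mod 3 = 0"
    by (simp add: w_def mod_add_left_eq)
  have e: "(w PosE + (\<Sum>i\<in>I2 r. w (P i))) mod 3 = 0"
    by (simp add: w_def mod_add_left_eq)
  have msg: "\<forall>m\<in>?M. w (P m) = X m" by (simp add: wP val_def msg_positions_def)
  have Qw: "?Q w" unfolding A2_codeword_def using word vec o e msg by blast
  have uniq: "w1 = w2" if q1: "?Q w1" and q2: "?Q w2" for w1 w2
  proof -
    have a1: "\<forall>j<r. (\<Sum>i\<in>?S. w1 (P i) * i j) mod 3 = 0"
      "(w1 PosO + (\<Sum>i\<in>I1 r. w1 (P i))) mod 3 = 0" "(w1 PosE + (\<Sum>i\<in>I2 r. w1 (P i))) mod 3 = 0"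
      "\<forall>m\<in>?M. w1 (P m) = X m"
      using q1 unfolding A2_codeword_def by blast+
    have a2: "\<forall>j<r. (\<Sum>i\<in>?S. w2 (P i) * i j) mod 3 = 0"
      "(w2 PosO + (\<Sum>i\<in>I1 r. w2 (P i))) mod 3 = 0" "(w2 PosE + (\<Sum>i\<in>I2 r. w2 (P i))) mod 3 = 0"
      "\<forall>m\<in>?M. w2 (P m) = X m"
      using q2 unfolding A2_codeword_def by blast+
    have v1: "w1 p \<in> {0,1,2}" "\<forall>p. p \<notin> positions r \<longrightarrow> w1 p = 0" for p
      using q1 by (auto simp: A2_codeword_def is_word_def)
    have v2: "w2 p \<in> {0,1,2}" "\<forall>p. p \<notin> positions r \<longrightarrow> w2 p = 0" for p
      using q2 by (auto simp: A2_codeword_def is_word_def)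
    have Rj: "(\<Sum>i\<in>R. ((w1 (P i) - w2 (P i)) mod 3) * i j) mod 3 = 0" if j: "j < r" for j
    proof -
      have "((0 - 0) mod 3 + (\<Sum>i\<in>R. ((w1 (P i) - w2 (P i)) mod 3) * i j)) mod 3 = 0"
        apply (rule diff_eq[where S = ?S])
        using finS R a1(1,4) a2(1,4) j by (auto simp: SRM)
      then show ?thesis by simp
    qed
    have cz: "\<forall>i\<in>R. (w1 (P i) - w2 (P i)) mod 3 = 0"
    proof -
      have ind: "\<forall>c. (\<forall>i\<in>R. c i \<in> {0,1,2}) \<longrightarrow> (\<forall>j < r. (\<Sum>i\<in>R. c i * i j) mod 3 = 0)
          \<longrightarrow> (\<forall>i\<in>R. c i = 0)" using B by (simp add: is_basis_def)
      have "\<forall>i\<in>R. (\<lambda>i. (w1 (P i) - w2 (P i)) mod 3) i \<in> {0,1,2}" using mod3_cases by blast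
      moreover have "\<forall>j < r. (\<Sum>i\<in>R. (\<lambda>i. (w1 (P i) - w2 (P i)) mod 3) i * i j) mod 3 = 0"
        using Rj by blast
      ultimately show ?thesis using spec[OF ind, of "\<lambda>i. (w1 (P i) - w2 (P i)) mod 3"] by blast
    qed
    have allP: "w1 (P i) = w2 (P i)" for i
    proof (cases "i \<in> ?S")
      case True
      show ?thesis
      proof (cases "i \<in> R")
        case True then have "(w1 (P i) - w2 (P i)) mod 3 = 0" using cz by blast
        then show ?thesis using eq3[OF v1(1) v2(1)] by simp
      next
        case False then have "i \<in> ?M" using \<open>i \<in> ?S\<close> by (simp add: msg_positions_def)
        then show ?thesis using q1 q2 by simp
      qed
    next
      case False
      then have "P i \<notin> positions r" by (auto simp: positions_def)
      then show ?thesis using v1 v2 by simp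
    qed
    have "((w1 PosO - w2 PosO) mod 3 + (\<Sum>i\<in>{}. ((w1 (P i) - w2 (P i)) mod 3) * 1)) mod 3 = 0"
      apply (rule diff_eq[where S = "I1 r"])
      using fin_I1 a1(2) a2(2) allP by auto
    then have O: "w1 PosO = w2 PosO" using eq3 v1 v2 by simp
    have "((w1 PosE - w2 PosE) mod 3 + (\<Sum>i\<in>{}. ((w1 (P i) - w2 (P i)) mod 3) * 1)) mod 3 = 0"
      apply (rule diff_eq[where S = "I2 r"])
      using fin_I2 a1(3) a2(3) allP by auto
    then have E: "w1 PosE = w2 PosE" using eq3 v1 v2 by simp
    show ?thesis
    proof
      fix p show "w1 p = w2 p" using allP O E by (cases p) auto
    qed
  qed
  have "\<exists>!w. ?Q w" using Qw uniq by blast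
  then have "?Q (THE w. ?Q w)" by (rule theI')
  then show ?thesis unfolding encode_def .
qed



theorem theorem4p1:
  fixes r :: nat and R :: "(nat \<Rightarrow> int) set" and X Y :: "(nat \<Rightarrow> int) \<Rightarrow> int"
  assumes "r \<ge> 3"
    and "R \<subseteq> I1 r" and "card R = r" and "is_basis r R"
    and "\<forall>m \<in> msg_positions r R. X m \<in> {0,1,2}"
    and "\<forall>m \<in> msg_positions r R. Y m \<in> {0,1,2}"
    and "\<exists>m \<in> msg_positions r R. X m \<noteq> Y m"
  shows "card {p \<in> positions r. encode r R X p \<noteq> encode r R Y p} \<ge> 4"
proof -
  let ?M = "msg_positions r R"
  let ?S = "I1 r \<union> I2 r"
  define w1 where "w1 = encode r R X"
  define w2 where "w2 = encode r R Y"
  have q1: "A2_codeword r w1" "\<forall>m\<in>?M. w1 (P m) = X m"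
    using encode_ok[OF assms(2,4,5)] unfolding w1_def by blast+
  have q2: "A2_codeword r w2" "\<forall>m\<in>?M. w2 (P m) = Y m"
    using encode_ok[OF assms(2,4,6)] unfolding w2_def by blast+
  have a1: "\<forall>j<r. (\<Sum>i\<in>?S. w1 (P i) * i j) mod 3 = 0"
      "(w1 PosO + (\<Sum>i\<in>I1 r. w1 (P i))) mod 3 = 0" "(w1 PosE + (\<Sum>i\<in>I2 r. w1 (P i))) mod 3 = 0"
      using q1(1) unfolding A2_codeword_def by blast+
  have a2: "\<forall>j<r. (\<Sum>i\<in>?S. w2 (P i) * i j) mod 3 = 0"
      "(w2 PosO + (\<Sum>i\<in>I1 r. w2 (P i))) mod 3 = 0" "(w2 PosE + (\<Sum>i\<in>I2 r. w2 (P i))) mod 3 = 0"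
      using q2(1) unfolding A2_codeword_def by blast+
  have v1: "w1 p \<in> {0,1,2}" for p using q1(1) by (simp add: A2_codeword_def is_word_def)
  have v2: "w2 p \<in> {0,1,2}" for p using q2(1) by (simp add: A2_codeword_def is_word_def)
  define d where "d p = (w1 p - w2 p) mod 3" for p
  have dnz: "d p \<noteq> 0 \<longleftrightarrow> w1 p \<noteq> w2 p" for p using eq3[OF v1 v2] by (simp add: d_def)
  have d12: "d p \<in> {1,2}" if "w1 p \<noteq> w2 p" for p
  proof -
    have "d p \<in> {0,1,2}" unfolding d_def by (rule mod3_cases)
    then show ?thesis using dnz[of p] that by auto
  qed
  define A where "A = {i \<in> I1 r. w1 (P i) \<noteq> w2 (P i)}"
  define B where "B = {i \<in> I2 r. w1 (P i) \<noteq> w2 (P i)}"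
  have AI: "A \<subseteq> I1 r" and BI: "B \<subseteq> I2 r" by (auto simp: A_def B_def)
  have finA: "finite A" using finite_subset[OF AI fin_I1] .
  have finB: "finite B" using finite_subset[OF BI fin_I2] .
  have ABd: "A \<inter> B = {}" using I12_disj[OF assms(1)] AI BI by blast
  have finS: "finite ?S" using fin_I1 fin_I2 by blast
  have EJ: "(\<Sum>i\<in>A \<union> B. d (P i) * i j) mod 3 = 0" if j: "j < r" for j
  proof -
    have "((0 - 0) mod 3 + (\<Sum>i\<in>A \<union> B. ((w1 (P i) - w2 (P i)) mod 3) * i j)) mod 3 = 0"
      by (rule diff_eq[where S = ?S]) (use finS a1(1) a2(1) j in \<open>auto simp: A_def B_def\<close>)
    then show ?thesis by (simp add: d_def)
  qed
  have EO: "(d PosO + (\<Sum>i\<in>A. d (P i))) mod 3 = 0"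
  proof -
    have "((w1 PosO - w2 PosO) mod 3 + (\<Sum>i\<in>A. ((w1 (P i) - w2 (P i)) mod 3) * 1)) mod 3 = 0"
      by (rule diff_eq[where S = "I1 r"]) (use fin_I1 a1(2) a2(2) in \<open>auto simp: A_def\<close>)
    then show ?thesis by (simp add: d_def)
  qed
  have EE: "(d PosE + (\<Sum>i\<in>B. d (P i))) mod 3 = 0"
  proof -
    have "((w1 PosE - w2 PosE) mod 3 + (\<Sum>i\<in>B. ((w1 (P i) - w2 (P i)) mod 3) * 1)) mod 3 = 0"
      by (rule diff_eq[where S = "I2 r"]) (use fin_I2 a1(3) a2(3) in \<open>auto simp: B_def\<close>)
    then show ?thesis by (simp add: d_def)
  qed
  have ne: "A \<union> B \<noteq> {}"
  proof -
    obtain m where m: "m \<in> ?M" "X m \<noteq> Y m" using assms(7) by blast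
    then have "w1 (P m) \<noteq> w2 (P m)" using q1(2) q2(2) by simp
    moreover have "m \<in> ?S" using m(1) by (simp add: msg_positions_def)
    ultimately show ?thesis by (auto simp: A_def B_def)
  qed
  have dA: "d (P x) \<in> {1,2}" if "x \<in> A" for x using d12 that by (simp add: A_def)
  have dB: "d (P x) \<in> {1,2}" if "x \<in> B" for x using d12 that by (simp add: B_def)
  have hA: "card A \<noteq> 1 \<and> card A \<noteq> 2 \<and> (card A = 3 \<longrightarrow> d PosO \<noteq> 0)" if "B = {}"
  proof -
    have k: "card A \<noteq> 1 \<and> card A \<noteq> 2 \<and> (card A = 3 \<longrightarrow> (\<Sum>x\<in>A. d (P x)) mod 3 \<noteq> 0)"
    proof (rule key[where t = 1 and r = r])
      fix x assume "x \<in> A"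
      then have "x \<in> I1 r" using AI by blast
      from I1_props[OF assms(1) this]
      show "(\<forall>j<r. x j \<in> {0,1}) \<and> (\<forall>j. r \<le> j \<longrightarrow> x j = 0) \<and> (\<exists>j<r. x j = 1)" .
    next
      fix j :: nat assume "j < r"
      then show "(\<Sum>x\<in>A. d (P x) * x j) mod 3 = 0" using EJ[of j] that by simp
    qed (use finA dA in auto)
    show ?thesis
    proof (intro conjI impI)
      show "card A \<noteq> 1" "card A \<noteq> 2" using k by blast+
    next
      assume "card A = 3"
      then have "(\<Sum>x\<in>A. d (P x)) mod 3 \<noteq> 0" by (rule mp[OF k[THEN conjunct2, THEN conjunct2]])
      then show "d PosO \<noteq> 0" using EO by auto
    qed
  qed
  have hB: "card B \<noteq> 1 \<and> card B \<noteq> 2 \<and> (card B = 3 \<longrightarrow> d PosE \<noteq> 0)" if "A = {}"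
  proof -
    have k: "card B \<noteq> 1 \<and> card B \<noteq> 2 \<and> (card B = 3 \<longrightarrow> (\<Sum>x\<in>B. d (P x)) mod 3 \<noteq> 0)"
    proof (rule key[where t = 2 and r = r])
      fix x assume "x \<in> B"
      then have "x \<in> I2 r" using BI by blast
      from I2_props[OF assms(1) this]
      show "(\<forall>j<r. x j \<in> {0,2}) \<and> (\<forall>j. r \<le> j \<longrightarrow> x j = 0) \<and> (\<exists>j<r. x j = 2)" .
    next
      fix j :: nat assume "j < r"
      then show "(\<Sum>x\<in>B. d (P x) * x j) mod 3 = 0" using EJ[of j] that by simp
    qed (use finB dB in auto)
    show ?thesis
    proof (intro conjI impI)
      show "card B \<noteq> 1" "card B \<noteq> 2" using k by blast+
    next
      assume "card B = 3"
      then have "(\<Sum>x\<in>B. d (P x)) mod 3 \<noteq> 0" by (rule mp[OF k[THEN conjunct2, THEN conjunct2]])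
      then show "d PosE \<noteq> 0" using EE by auto
    qed
  qed
  have h1A: "d PosO \<noteq> 0" if "card A = 1"
  proof
    assume z: "d PosO = 0"
    obtain a where a: "A = {a}" using card_1_singletonE[OF \<open>card A = 1\<close>] by blast
    have "d (P a) mod 3 = 0" using EO z a by simp
    moreover have "d (P a) \<in> {1,2}" using dA a by simp
    ultimately show False by auto
  qed
  have h1B: "d PosE \<noteq> 0" if "card B = 1"
  proof
    assume z: "d PosE = 0"
    obtain a where a: "B = {a}" using card_1_singletonE[OF \<open>card B = 1\<close>] by blast
    have "d (P a) mod 3 = 0" using EE z a by simp
    moreover have "d (P a) \<in> {1,2}" using dB a by simp
    ultimately show False by auto
  qed
  define oO :: nat where "oO = (if d PosO \<noteq> 0 then 1 else 0)"
  define oE :: nat where "oE = (if d PosE \<noteq> 0 then 1 else 0)"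
  define F where "F = (if d PosO \<noteq> 0 then {PosO} else {}) \<union> (if d PosE \<noteq> 0 then {PosE} else {})"
  define L where "L = P ` A \<union> P ` B \<union> F"
  let ?D = "{p \<in> positions r. encode r R X p \<noteq> encode r R Y p}"
  have D: "?D = {p \<in> positions r. w1 p \<noteq> w2 p}" by (simp add: w1_def w2_def)
  have LA: "P ` A \<subseteq> ?D" unfolding D
  proof
    fix p assume "p \<in> P ` A"
    then obtain i where i: "p = P i" "i \<in> A" by blast
    then have "i \<in> I1 r" "w1 (P i) \<noteq> w2 (P i)" by (simp_all add: A_def)
    then show "p \<in> {p \<in> positions r. w1 p \<noteq> w2 p}" using i(1) by (simp add: positions_def)
  qed
  have LB: "P ` B \<subseteq> ?D" unfolding D
  proof
    fix p assume "p \<in> P ` B"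
    then obtain i where i: "p = P i" "i \<in> B" by blast
    then have "i \<in> I2 r" "w1 (P i) \<noteq> w2 (P i)" by (simp_all add: B_def)
    then show "p \<in> {p \<in> positions r. w1 p \<noteq> w2 p}" using i(1) by (simp add: positions_def)
  qed
  have LF: "F \<subseteq> ?D" unfolding D F_def using dnz[of PosO] dnz[of PosE]
    by (simp add: positions_def)
  have LD: "L \<subseteq> ?D" unfolding L_def using LA LB LF by blast
  have finD: "finite ?D"
  proof -
    have "finite (positions r)" using finS by (simp add: positions_def)
    then show ?thesis by simp
  qed
  have injP: "inj_on P Z" for Z by (rule inj_onI) simp
  have cF: "card F = oO + oE"
    unfolding F_def oO_def oE_def by simp
  have dis1: "(P ` A \<union> P ` B) \<inter> F = {}" unfolding F_def by auto
  have finF: "finite F" by (simp add: F_def)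
  have dis2: "P ` A \<inter> P ` B = {}" using ABd by blast
  have "card L = card (P ` A \<union> P ` B) + card F"
    unfolding L_def by (rule card_Un_disjoint) (simp_all add: finA finB dis1 finF)
  also have "card (P ` A \<union> P ` B) = card (P ` A) + card (P ` B)"
    by (rule card_Un_disjoint) (simp_all add: finA finB dis2)
  also have "card (P ` A) = card A" by (rule card_image[OF injP])
  also have "card (P ` B) = card B" by (rule card_image[OF injP])
  finally have cL: "card L = card A + card B + oO + oE" using cF by simp
  have cD: "card L \<le> card ?D" by (rule card_mono[OF finD LD])
  have f1: "card A + card B \<ge> 1"
  proof (rule ccontr)
    assume "\<not> ?thesis"
    then have "card A = 0" "card B = 0" by simp_all
    then have "A = {}" "B = {}" using finA finB by simp_all
    then show False using ne by simp
  qed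
  have f2: "card A = 1 \<longrightarrow> oO = 1" using h1A oO_def by simp
  have f3: "card B = 1 \<longrightarrow> oE = 1" using h1B oE_def by simp
  have f4: "card B = 0 \<longrightarrow> card A \<noteq> 1 \<and> card A \<noteq> 2 \<and> (card A = 3 \<longrightarrow> oO = 1)"
    using hA finB oO_def by simp
  have f5: "card A = 0 \<longrightarrow> card B \<noteq> 1 \<and> card B \<noteq> 2 \<and> (card B = 3 \<longrightarrow> oE = 1)"
    using hB finA oE_def by simp
  have f6: "oO \<le> 1" "oE \<le> 1" by (simp_all add: oO_def oE_def)
  have "4 \<le> card A + card B + oO + oE" using f1 f2 f3 f4 f5 f6 by presburger
  then show ?thesis using cL cD by linarith
qed

end
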